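(* Let $G$ be a group and let $H, K \leq G$ be commensurable subgroups. Then there is a geodesic in $\mathcal{C}(G)$ from $H$ to $K$ whose vertices are $H$, $H\cap K$, and $K$. Hence the distance between $H$ and $K$ in $\mathcal{C}(G)$ is $c(H,K)$, and the edge $(H,K)$ is a geodesic.
   Context: For subgroups $A,B$ of $G$, $c(A,B) = [A:A\cap B][B:A\cap B]$; $A$ and $B$ are commensurable if $c(A,B)<\infty$. The commensurability graph $\mathcal{C}(G)$ is the weighted graph whose vertices are all subgroups of $G$, with an edge between $A$ and $B$ if and only if $A\cap B$ has finite index in both $A$ and $B$, this edge having weight $c(A,B)$. The length of a path is the product of its edge weights; $\mathcal{C}(G)$ is given the path metric, the distance between two vertices being the minimal length of a path joining them, and a geodesic is a path of minimal length between its endpoints. *)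

theory Defs
  imports "HOL-Algebra.Algebra"
begin

definition rel_cosets :: "('a, 'b) monoid_scheme \<Rightarrow> 'a set \<Rightarrow> 'a set \<Rightarrow> 'a set set" where
  "rel_cosets G A B = {(A \<inter> B) #>\<^bsub>G\<^esub> a | a. a \<in> A}"

definition rel_index :: "('a, 'b) monoid_scheme \<Rightarrow> 'a set \<Rightarrow> 'a set \<Rightarrow> nat" where
  "rel_index G A B = card (rel_cosets G A B)"

definition commensurable :: "('a, 'b) monoid_scheme \<Rightarrow> 'a set \<Rightarrow> 'a set \<Rightarrow> bool" where
  "commensurable G A B \<longleftrightarrow> finite (rel_cosets G A B) \<and> finite (rel_cosets G B A)"

text \<open>c(A,B) = [A : A \<inter> B][B : A \<inter> B] (meaningful when A, B commensurable).\<close>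
definition cweight :: "('a, 'b) monoid_scheme \<Rightarrow> 'a set \<Rightarrow> 'a set \<Rightarrow> nat" where
  "cweight G A B = rel_index G A B * rel_index G B A"

definition comm_path :: "('a, 'b) monoid_scheme \<Rightarrow> 'a set list \<Rightarrow> bool" where
  "comm_path G p \<longleftrightarrow> p \<noteq> [] \<and> (\<forall>A\<in>set p. subgroup A G) \<and>
     (\<forall>i < length p - 1. commensurable G (p ! i) (p ! Suc i))"

definition path_length :: "('a, 'b) monoid_scheme \<Rightarrow> 'a set list \<Rightarrow> nat" where
  "path_length G p = (\<Prod>i < length p - 1. cweight G (p ! i) (p ! Suc i))"

definition comm_dist :: "('a, 'b) monoid_scheme \<Rightarrow> 'a set \<Rightarrow> 'a set \<Rightarrow> nat" where
  "comm_dist G A B = Inf {path_length G p | p. comm_path G p \<and> hd p = A \<and> last p = B}"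

definition comm_geodesic :: "('a, 'b) monoid_scheme \<Rightarrow> 'a set list \<Rightarrow> bool" where
  "comm_geodesic G p \<longleftrightarrow> comm_path G p \<and>
     (\<forall>q. comm_path G q \<and> hd q = hd p \<and> last q = last p \<longrightarrow> path_length G p \<le> path_length G q)"

end

theory Submission
  imports Defs
begin

lemma (in group) key_bound:
  assumes A: "subgroup A G" and B: "subgroup B G" and C: "subgroup C G"
    and fX: "finite (rel_cosets G A B)" and fY: "finite (rel_cosets G B C)"
  shows "finite (rel_cosets G A C) \<and>
         card (rel_cosets G A C) \<le> card (rel_cosets G A B) * card (rel_cosets G B C)"
proof -
  define XX where "XX = rel_cosets G A B"
  define YY where "YY = rel_cosets G B C"
  define \<rho> :: "'a set \<Rightarrow> 'a" where "\<rho> x = (SOME r. r \<in> x)" for x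
  define \<sigma> :: "'a set \<Rightarrow> 'a" where "\<sigma> y = (SOME s. s \<in> y \<inter> (A \<inter> B))" for y
  have AB: "subgroup (A \<inter> B) G" by (rule subgroups_Inter_pair[OF A B])
  have AC: "subgroup (A \<inter> C) G" by (rule subgroups_Inter_pair[OF A C])
  have BC: "subgroup (B \<inter> C) G" by (rule subgroups_Inter_pair[OF B C])
  have Acar: "A \<subseteq> carrier G" using A subgroup.subset by blast
  have Bcar: "B \<subseteq> carrier G" using B subgroup.subset by blast
  have sub: "rel_cosets G A C \<subseteq> (\<lambda>(y,x). (A \<inter> C) #> (\<sigma> y \<otimes> \<rho> x)) ` (YY \<times> XX)"
  proof
    fix z assume "z \<in> rel_cosets G A C"
    then obtain a where a: "a \<in> A" and z: "z = (A \<inter> C) #> a"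
      unfolding rel_cosets_def by auto
    have aG: "a \<in> carrier G" using a Acar by blast
    define x where "x = (A \<inter> B) #> a"
    have xX: "x \<in> XX" unfolding x_def XX_def rel_cosets_def using a by auto
    have "a \<in> x" unfolding x_def by (rule rcos_self[OF aG AB])
    hence rx: "\<rho> x \<in> x" unfolding \<rho>_def by (rule someI)
    then obtain h' where h': "h' \<in> A \<inter> B" and r: "\<rho> x = h' \<otimes> a"
      unfolding x_def r_coset_def by auto
    have h'G: "h' \<in> carrier G" using h' Acar by blast
    define h where "h = inv h'"
    have hAB: "h \<in> A \<inter> B" unfolding h_def by (rule subgroup.m_inv_closed[OF AB h'])
    have hG: "h \<in> carrier G" using hAB Acar by blast
    have rG: "\<rho> x \<in> carrier G" using r h'G aG by simp
    have ahr: "a = h \<otimes> \<rho> x" unfolding r h_def using h'G aG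
      by (simp add: m_assoc[symmetric])
    define y where "y = (B \<inter> C) #> h"
    have yY: "y \<in> YY" unfolding y_def YY_def rel_cosets_def using hAB by auto
    have "h \<in> y \<inter> (A \<inter> B)" unfolding y_def using rcos_self[OF hG BC] hAB by blast
    hence sy: "\<sigma> y \<in> y \<inter> (A \<inter> B)" unfolding \<sigma>_def by (rule someI)
    then obtain k where k: "k \<in> B \<inter> C" and s: "\<sigma> y = k \<otimes> h"
      unfolding y_def r_coset_def by auto
    have kG: "k \<in> carrier G" using k Bcar by blast
    have "k = \<sigma> y \<otimes> inv h" using s kG hG by (simp add: m_assoc)
    moreover have "\<sigma> y \<otimes> inv h \<in> A"
    proof -
      have "\<sigma> y \<in> A" using sy by blast
      moreover have "inv h \<in> A" using hAB subgroup.m_inv_closed[OF A] by blast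
      ultimately show ?thesis using subgroup.m_closed[OF A] by blast
    qed
    ultimately have kA: "k \<in> A" by simp
    have kAC: "k \<in> A \<inter> C" using kA k by blast
    have "(A \<inter> C) #> (\<sigma> y \<otimes> \<rho> x) = (A \<inter> C) #> (k \<otimes> (h \<otimes> \<rho> x))"
      using s kG hG rG by (simp add: m_assoc)
    also have "\<dots> = ((A \<inter> C) #> k) #> (h \<otimes> \<rho> x)"
      using coset_mult_assoc[of "A \<inter> C" k "h \<otimes> \<rho> x"] Acar kG hG rG by auto
    also have "\<dots> = (A \<inter> C) #> (h \<otimes> \<rho> x)"
      using subgroup.rcos_const[OF AC is_group kAC] by simp
    also have "\<dots> = z" using z ahr by simp
    finally have zz: "z = (\<lambda>(y,x). (A \<inter> C) #> (\<sigma> y \<otimes> \<rho> x)) (y, x)" by simp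
    show "z \<in> (\<lambda>(y,x). (A \<inter> C) #> (\<sigma> y \<otimes> \<rho> x)) ` (YY \<times> XX)"
      using xX yY zz by (intro rev_image_eqI[of "(y,x)"]) simp_all
  qed
  have fin: "finite (YY \<times> XX)" using fX fY XX_def YY_def by simp
  have "card (rel_cosets G A C) \<le> card ((\<lambda>(y,x). (A \<inter> C) #> (\<sigma> y \<otimes> \<rho> x)) ` (YY \<times> XX))"
    by (rule card_mono[OF finite_imageI[OF fin] sub])
  also have "\<dots> \<le> card (YY \<times> XX)" by (rule card_image_le[OF fin])
  also have "\<dots> = card XX * card YY" by (simp add: card_cartesian_product)
  finally have c: "card (rel_cosets G A C) \<le> card XX * card YY" .
  have f: "finite (rel_cosets G A C)" by (rule finite_subset[OF sub finite_imageI[OF fin]])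
  show ?thesis using c f unfolding XX_def YY_def by blast
qed

lemma (in group) rel_cosets_self:
  assumes "subgroup A G" shows "rel_cosets G A A = {A}"
proof -
  have "\<And>a. a \<in> A \<Longrightarrow> A #> a = A" using subgroup.rcos_const[OF assms is_group] by blast
  moreover have "\<one> \<in> A" using assms subgroup.one_closed by blast
  ultimately show ?thesis unfolding rel_cosets_def by auto
qed

lemma (in group) comm_trans:
  assumes "subgroup A G" "subgroup B G" "subgroup C G"
    "commensurable G A B" "commensurable G B C"
  shows "commensurable G A C \<and> cweight G A C \<le> cweight G A B * cweight G B C"
proof -
  have 1: "finite (rel_cosets G A C) \<and>
         card (rel_cosets G A C) \<le> card (rel_cosets G A B) * card (rel_cosets G B C)"
    using key_bound assms unfolding commensurable_def by blast
  have 2: "finite (rel_cosets G C A) \<and>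
         card (rel_cosets G C A) \<le> card (rel_cosets G C B) * card (rel_cosets G B A)"
    using key_bound assms unfolding commensurable_def by blast
  have "cweight G A C \<le> (card (rel_cosets G A B) * card (rel_cosets G B C)) *
        (card (rel_cosets G C B) * card (rel_cosets G B A))"
    unfolding cweight_def rel_index_def using 1 2 mult_le_mono by blast
  also have "\<dots> = cweight G A B * cweight G B C"
    unfolding cweight_def rel_index_def by simp
  finally show ?thesis using 1 2 unfolding commensurable_def by simp
qed

lemma comm_path_cons:
  "comm_path G (A # B # r) \<longleftrightarrow> subgroup A G \<and> commensurable G A B \<and> comm_path G (B # r)"
  unfolding comm_path_def by (auto simp: less_Suc_eq_0_disj)

lemma path_length_cons:
  "path_length G (A # B # r) = cweight G A B * path_length G (B # r)"
proof -
  have "path_length G (A # B # r) = (\<Prod>i < Suc (length r). cweight G ((A # B # r) ! i) ((A # B # r) ! Suc i))"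
    unfolding path_length_def by simp
  also have "\<dots> = cweight G A B * (\<Prod>i < length r. cweight G ((B # r) ! i) ((B # r) ! Suc i))"
    by (subst prod.lessThan_Suc_shift) simp
  also have "\<dots> = cweight G A B * path_length G (B # r)"
    unfolding path_length_def by simp
  finally show ?thesis .
qed

lemma (in group) path_bound:
  "comm_path G (A # q) \<Longrightarrow> commensurable G A (last (A # q)) \<and>
     cweight G A (last (A # q)) \<le> path_length G (A # q)"
proof (induction q arbitrary: A)
  case Nil
  have s: "subgroup A G" using Nil unfolding comm_path_def by simp
  show ?case using rel_cosets_self[OF s]
    by (simp add: commensurable_def cweight_def rel_index_def path_length_def)
next
  case (Cons B r)
  have sA: "subgroup A G" and cAB: "commensurable G A B" and pB: "comm_path G (B # r)"
    using Cons.prems comm_path_cons by blast+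
  have sB: "subgroup B G" using pB unfolding comm_path_def by simp
  have sL: "subgroup (last (B # r)) G" using pB unfolding comm_path_def by simp
  have IH: "commensurable G B (last (B # r)) \<and> cweight G B (last (B # r)) \<le> path_length G (B # r)"
    using Cons.IH[OF pB] .
  have T: "commensurable G A (last (B # r)) \<and>
      cweight G A (last (B # r)) \<le> cweight G A B * cweight G B (last (B # r))"
    using comm_trans[OF sA sB sL cAB] IH by blast
  have "cweight G A (last (B # r)) \<le> cweight G A B * path_length G (B # r)"
    using T IH order_trans mult_le_mono2 by blast
  moreover have "last (A # B # r) = last (B # r)" by simp
  ultimately show ?case using T path_length_cons[of G A B r] by simp
qed

lemma (in group) path_bound':
  assumes "comm_path G q" "hd q = H" "last q = K"
  shows "cweight G H K \<le> path_length G q"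
proof -
  obtain r where q: "q = H # r" using assms by (cases q) (auto simp: comm_path_def)
  show ?thesis using path_bound[of H r] assms q by simp
qed

theorem lemma6:
  assumes "group G" and "subgroup H G" and "subgroup K G" and "commensurable G H K"
  shows "comm_geodesic G [H, H \<inter> K, K]
       \<and> comm_dist G H K = cweight G H K
       \<and> comm_geodesic G [H, K]"
proof -
  interpret group G by (rule assms(1))
  have HK: "subgroup (H \<inter> K) G" by (rule subgroups_Inter_pair[OF assms(2,3)])
  have e1: "rel_cosets G H (H \<inter> K) = rel_cosets G H K"
    unfolding rel_cosets_def by (simp add: Int_assoc[symmetric])
  have e2: "rel_cosets G (H \<inter> K) H = {H \<inter> K}"
    using rel_cosets_self[OF HK] unfolding rel_cosets_def by (simp add: Int_ac)
  have e3: "rel_cosets G K (H \<inter> K) = rel_cosets G K H"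
    unfolding rel_cosets_def by (simp add: Int_ac)
  have e4: "rel_cosets G (H \<inter> K) K = {H \<inter> K}"
    using rel_cosets_self[OF HK] unfolding rel_cosets_def by (simp add: Int_ac)
  have p3: "comm_path G [H, H \<inter> K, K]"
    unfolding comm_path_cons using assms(2,3,4) HK e1 e2 e3 e4
    by (simp add: comm_path_def commensurable_def)
  have l3: "path_length G [H, H \<inter> K, K] = cweight G H K"
    using e1 e2 e3 e4
    by (simp add: path_length_cons path_length_def cweight_def rel_index_def)
  have p2: "comm_path G [H, K]"
    using assms(2,3,4) by (simp add: comm_path_cons comm_path_def)
  have l2: "path_length G [H, K] = cweight G H K"
    by (simp add: path_length_cons path_length_def)
  have lb: "\<And>q. comm_path G q \<and> hd q = H \<and> last q = K \<Longrightarrow> cweight G H K \<le> path_length G q"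
    using path_bound' by blast
  have g3: "comm_geodesic G [H, H \<inter> K, K]"
    unfolding comm_geodesic_def using p3 l3 lb by simp
  have g2: "comm_geodesic G [H, K]"
    unfolding comm_geodesic_def using p2 l2 lb by simp
  have d: "comm_dist G H K = cweight G H K"
    unfolding comm_dist_def
    by (rule cInf_eq_minimum) (use p2 l2 lb in force)+
  show ?thesis using g3 g2 d by simp
qed

end
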